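(* Assume that for all $\emptyset\subsetneq u\subsetneq[1:p]$ we have estimators $\widehat W_u$ that converge to $W_u$ in probability (resp. almost surely) when $N_u\to+\infty$, where $\kappa N_u$ is the cost of $\widehat W_u$. If we use the subset $W$-aggregation procedure with $N_u=N_u^*:=\mathrm{Round}\big(N_{tot}\kappa^{-1}\binom{p}{|u|}^{-1}(p-1)^{-1}\big)$ for $\emptyset\subsetneq u\subsetneq[1:p]$ ($\mathrm{Round}$ = nearest integer), then the estimators of the Shapley effects converge to the Shapley effects in probability (resp. almost surely) when $N_{tot}\to+\infty$, where $N_{tot}$ is the total cost of the subset $W$-aggregation procedure.
   Context: Setting: $\mathbf{X}=(X_1,\dots,X_p)$, $Y=f(\mathbf{X})$ with $f\in L^2(\mathbb{P}_\mathbf{X})$. $W_u$ denotes either $V_u=\mathrm{Var}(\mathrm{E}(Y|\mathbf{X}_u))$ or $E_u=\mathrm{E}(\mathrm{Var}(Y|\mathbf{X}_{-u}))$ ($-u=[1:p]\setminus u$), with $W_\emptyset=0$, $W_{[1:p]}=\mathrm{Var}(Y)$ known. Shapley effects: $\eta_i=\frac{1}{p\mathrm{Var}(Y)}\sum_{u\subset -i}\binom{p-1}{|u|}^{-1}(W_{u\cup\{i\}}-W_u)$. Subset $W$-aggregation procedure: compute each $\widehat W_u$ once and set $\widehat\eta_i=\frac{1}{p\mathrm{Var}(Y)}\sum_{u\subset -i}\binom{p-1}{|u|}^{-1}(\widehat W_{u\cup\{i\}}-\widehat W_u)$. The cost is the number of evaluations of $f$. *)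

theory Defs
  imports "HOL-Probability.Probability"
begin

text \<open>Shapley effects computed from a family of values V_u (V_emptyset = 0, V_[1:p] = Var Y).\<close>
definition shapley_W :: "nat \<Rightarrow> (nat set \<Rightarrow> real) \<Rightarrow> nat \<Rightarrow> real" where
  "shapley_W p V i =
     (1 / (real p * V {1..p})) *
     (\<Sum>u\<in>Pow ({1..p} - {i}). (V (insert i u) - V u) / real ((p - 1) choose card u))"

definition agg_W :: "nat \<Rightarrow> real \<Rightarrow> (nat set \<Rightarrow> nat \<Rightarrow> 'a \<Rightarrow> real) \<Rightarrow> (nat set \<Rightarrow> nat) \<Rightarrow> 'a
                     \<Rightarrow> nat set \<Rightarrow> real" where
  "agg_W p VarY What N \<omega> u =
     (if u = {} then 0 else if u = {1..p} then VarY else What u (N u) \<omega>)"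

definition N_star :: "nat \<Rightarrow> real \<Rightarrow> real \<Rightarrow> nat set \<Rightarrow> nat" where
  "N_star p \<kappa> Ntot u =
     nat (round (Ntot / \<kappa> / real (p choose card u) / real (p - 1)))"

definition conv_in_prob :: "'a measure \<Rightarrow> ('i \<Rightarrow> 'a \<Rightarrow> real) \<Rightarrow> real \<Rightarrow> 'i filter \<Rightarrow> bool" where
  "conv_in_prob M X L F \<longleftrightarrow>
     (\<forall>\<epsilon>>0. ((\<lambda>n. measure M {\<omega>\<in>space M. \<epsilon> < \<bar>X n \<omega> - L\<bar>}) \<longlongrightarrow> 0) F)"

definition conv_as :: "'a measure \<Rightarrow> ('i \<Rightarrow> 'a \<Rightarrow> real) \<Rightarrow> real \<Rightarrow> 'i filter \<Rightarrow> bool" where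
  "conv_as M X L F \<longleftrightarrow> (AE \<omega> in M. ((\<lambda>n. X n \<omega>) \<longlongrightarrow> L) F)"

end

theory Submission imports Defs begin

lemma cip_const: "conv_in_prob M (\<lambda>n \<omega>. c) c F"
  unfolding conv_in_prob_def by simp

lemma cip_scale:
  assumes "conv_in_prob M X L F"
  shows "conv_in_prob M (\<lambda>n \<omega>. c * X n \<omega>) (c * L) F"
proof (cases "c = 0")
  case True then show ?thesis unfolding conv_in_prob_def by simp
next
  case False
  show ?thesis unfolding conv_in_prob_def
  proof (intro allI impI)
    fix e :: real assume e: "e > 0"
    have "e / \<bar>c\<bar> > 0" using e False by simp
    then have t: "((\<lambda>n. measure M {\<omega>\<in>space M. e / \<bar>c\<bar> < \<bar>X n \<omega> - L\<bar>}) \<longlongrightarrow> 0) F"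
      using assms unfolding conv_in_prob_def by blast
    have "{\<omega>\<in>space M. e < \<bar>c * X n \<omega> - c * L\<bar>} = {\<omega>\<in>space M. e / \<bar>c\<bar> < \<bar>X n \<omega> - L\<bar>}" for n
    proof -
      have "e < \<bar>c * X n \<omega> - c * L\<bar> \<longleftrightarrow> e / \<bar>c\<bar> < \<bar>X n \<omega> - L\<bar>" for \<omega>
      proof -
        have "\<bar>c * X n \<omega> - c * L\<bar> = \<bar>c\<bar> * \<bar>X n \<omega> - L\<bar>"
          by (simp add: right_diff_distrib[symmetric] abs_mult)
        then show ?thesis using False by (simp add: divide_less_eq mult.commute)
      qed
      then show ?thesis by auto
    qed
    then show "((\<lambda>n. measure M {\<omega>\<in>space M. e < \<bar>c * X n \<omega> - c * L\<bar>}) \<longlongrightarrow> 0) F"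
      using t by simp
  qed
qed

lemma cip_add:
  assumes "conv_in_prob M X a F" "conv_in_prob M Y b F"
    and "\<And>n. X n \<in> borel_measurable M" "\<And>n. Y n \<in> borel_measurable M"
    and P: "prob_space M"
  shows "conv_in_prob M (\<lambda>n \<omega>. X n \<omega> + Y n \<omega>) (a + b) F"
  unfolding conv_in_prob_def
proof (intro allI impI)
  fix e :: real assume e: "e > 0"
  then have e2: "e/2 > 0" by simp
  let ?A = "\<lambda>n. {\<omega>\<in>space M. e/2 < \<bar>X n \<omega> - a\<bar>}"
  let ?B = "\<lambda>n. {\<omega>\<in>space M. e/2 < \<bar>Y n \<omega> - b\<bar>}"
  have tA: "((\<lambda>n. measure M (?A n)) \<longlongrightarrow> 0) F" using assms(1) e2 unfolding conv_in_prob_def by blast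
  have tB: "((\<lambda>n. measure M (?B n)) \<longlongrightarrow> 0) F" using assms(2) e2 unfolding conv_in_prob_def by blast
  have mA: "?A n \<in> sets M" for n using assms(3)[of n] by measurable
  have mB: "?B n \<in> sets M" for n using assms(4)[of n] by measurable
  have le: "measure M {\<omega>\<in>space M. e < \<bar>X n \<omega> + Y n \<omega> - (a + b)\<bar>} \<le> measure M (?A n) + measure M (?B n)" for n
  proof -
    have "measure M {\<omega>\<in>space M. e < \<bar>X n \<omega> + Y n \<omega> - (a + b)\<bar>} \<le> measure M (?A n \<union> ?B n)"
    proof (rule finite_measure.finite_measure_mono)
      show "finite_measure M" using P by (simp add: prob_space_def)
      show "?A n \<union> ?B n \<in> sets M" using mA mB by auto
      show "{\<omega>\<in>space M. e < \<bar>X n \<omega> + Y n \<omega> - (a + b)\<bar>} \<subseteq> ?A n \<union> ?B n"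
        by (auto simp: abs_if)
    qed
    also have "\<dots> \<le> measure M (?A n) + measure M (?B n)" by (rule measure_Un_le[OF mA mB])
    finally show ?thesis .
  qed
  show "((\<lambda>n. measure M {\<omega>\<in>space M. e < \<bar>X n \<omega> + Y n \<omega> - (a + b)\<bar>}) \<longlongrightarrow> 0) F"
    by (rule tendsto_sandwich[of "\<lambda>_. 0" _ _ "\<lambda>n. measure M (?A n) + measure M (?B n)"])
       (use le tA tB tendsto_add[OF tA tB] in auto)
qed


lemma cip_sum:
  assumes "finite S" "prob_space M"
    and "\<And>k n. k \<in> S \<Longrightarrow> Z k n \<in> borel_measurable M"
    and "\<And>k. k \<in> S \<Longrightarrow> conv_in_prob M (Z k) (L k) F"
  shows "conv_in_prob M (\<lambda>n \<omega>. \<Sum>k\<in>S. Z k n \<omega>) (\<Sum>k\<in>S. L k) F"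
  using assms
proof (induction S rule: finite_induct)
  case empty
  then show ?case using cip_const[of M 0 F] by simp
next
  case (insert x S)
  have "conv_in_prob M (\<lambda>n \<omega>. Z x n \<omega> + (\<Sum>k\<in>S. Z k n \<omega>)) (L x + (\<Sum>k\<in>S. L k)) F"
    by (rule cip_add) (use insert in auto)
  then show ?case using insert by simp
qed

lemma round_at_top: "filterlim (\<lambda>y::real. nat (round y)) at_top at_top"
  unfolding filterlim_at_top
proof
  fix Z :: nat
  have "Z \<le> nat (round y)" if "real Z \<le> y" for y :: real
  proof -
    have "real_of_int (int Z) \<le> y" using that by simp
    then have "int Z \<le> round y"
      by (metis floor_le_round le_floor_iff order_trans)
    then show "Z \<le> nat (round y)" by simp
  qed
  note * = this
  show "\<forall>\<^sub>F y in at_top. Z \<le> nat (round (y::real))"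
    unfolding eventually_at_top_linorder
    by (rule exI[of _ "real Z"]) (use * in auto)
qed

lemma div_at_top:
  assumes "(c::real) > 0"
  shows "filterlim (\<lambda>x::real. x / c) at_top at_top"
proof -
  have "filterlim (\<lambda>x::real. inverse c * x) at_top at_top"
    by (rule filterlim_tendsto_pos_mult_at_top[OF tendsto_const]) (use assms in \<open>auto intro: filterlim_ident\<close>)
  then show ?thesis by (simp add: field_simps)
qed


lemma Nstar_at_top:
  assumes "\<kappa> > 0" "u \<noteq> {}" "u \<subset> {1..p}"
  shows "filterlim (\<lambda>Ntot. N_star p \<kappa> Ntot u) at_top at_top"
proof -
  have fin: "finite {1..p}" by simp
  have c1: "card u \<ge> 1" 
  proof -
    have "finite u" using assms(3) fin finite_subset by blast
    then show ?thesis using assms(2) by (simp add: Suc_le_eq card_gt_0_iff)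
  qed
  have c2: "card u < p" using psubset_card_mono[OF fin assms(3)] by simp
  have b: "real (p choose card u) > 0" using c2 by simp
  have d: "real (p - 1) > 0" using c1 c2 by simp
  have "filterlim (\<lambda>x::real. x / \<kappa> / real (p choose card u) / real (p - 1)) at_top at_top"
    by (rule filterlim_compose[OF div_at_top[OF d]], rule filterlim_compose[OF div_at_top[OF b]],
        rule div_at_top[OF assms(1)])
  then show ?thesis unfolding N_star_def by (rule filterlim_compose[OF round_at_top])
qed

lemma shapley_expand:
  "shapley_W p V i = (\<Sum>u\<in>Pow ({1..p} - {i}).
      (1 / (real p * V {1..p}) / real ((p - 1) choose card u)) * (V (insert i u) + (-1) * V u))"
  unfolding shapley_W_def sum_distrib_left by (rule sum.cong) auto

theorem proposition4:
  fixes M :: "'a measure" and p :: nat and \<kappa> :: real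
    and W :: "nat set \<Rightarrow> real"
    and What :: "nat set \<Rightarrow> nat \<Rightarrow> 'a \<Rightarrow> real"
  assumes "prob_space M"
    and "\<kappa> > 0"
    and "W {} = 0"
    and "\<And>u N. u \<noteq> {} \<Longrightarrow> u \<subset> {1..p} \<Longrightarrow> What u N \<in> borel_measurable M"
  shows "((\<forall>u. u \<noteq> {} \<and> u \<subset> {1..p} \<longrightarrow> conv_in_prob M (What u) (W u) sequentially) \<longrightarrow>
           (\<forall>i\<in>{1..p}. conv_in_prob M
              (\<lambda>Ntot \<omega>. shapley_W p (agg_W p (W {1..p}) What (N_star p \<kappa> Ntot) \<omega>) i)
              (shapley_W p W i) at_top))
       \<and> ((\<forall>u. u \<noteq> {} \<and> u \<subset> {1..p} \<longrightarrow> conv_as M (What u) (W u) sequentially) \<longrightarrow>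
           (\<forall>i\<in>{1..p}. conv_as M
              (\<lambda>Ntot \<omega>. shapley_W p (agg_W p (W {1..p}) What (N_star p \<kappa> Ntot) \<omega>) i)
              (shapley_W p W i) at_top))"
proof -
  let ?X = "\<lambda>Ntot \<omega>. agg_W p (W {1..p}) What (N_star p \<kappa> Ntot) \<omega>"
  have meas: "(\<lambda>\<omega>. ?X Ntot \<omega> u) \<in> borel_measurable M" if "u \<subseteq> {1..p}" for u Ntot
  proof (cases "u = {} \<or> u = {1..p}")
    case True
    then have "(\<lambda>\<omega>. ?X Ntot \<omega> u) = (\<lambda>\<omega>. if u = {} then 0 else W {1..p})"
      unfolding agg_W_def by auto
    then show ?thesis by simp
  next
    case False
    then have "What u (N_star p \<kappa> Ntot u) \<in> borel_measurable M"
      using assms(4) that by blast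
    then show ?thesis using False unfolding agg_W_def by simp
  qed
  have top: "?X Ntot \<omega> {1..p} = W {1..p}" if "p \<ge> 1" for Ntot \<omega>
    using that unfolding agg_W_def by auto
  have bot: "?X Ntot \<omega> {} = W {}" for Ntot \<omega>
    using assms(3) unfolding agg_W_def by auto
  have mid: "?X Ntot \<omega> u = What u (N_star p \<kappa> Ntot u) \<omega>" if "u \<noteq> {}" "u \<noteq> {1..p}" for u Ntot \<omega>
    using that unfolding agg_W_def by auto
  have sub: "insert i u \<subseteq> {1..p}" "u \<subseteq> {1..p}" if "i \<in> {1..p}" "u \<in> Pow ({1..p} - {i})" for i u
    using that by auto
  have exp: "shapley_W p (?X Ntot \<omega>) i = (\<Sum>u\<in>Pow ({1..p} - {i}).
      (1 / (real p * W {1..p}) / real ((p - 1) choose card u)) * (?X Ntot \<omega> (insert i u) + (-1) * ?X Ntot \<omega> u))"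
    if "i \<in> {1..p}" for Ntot \<omega> i
    using shapley_expand[of p "?X Ntot \<omega>" i] top[of Ntot \<omega>] that by simp
  have expW: "shapley_W p W i = (\<Sum>u\<in>Pow ({1..p} - {i}).
      (1 / (real p * W {1..p}) / real ((p - 1) choose card u)) * (W (insert i u) + (-1) * W u))" for i
    by (rule shapley_expand)
  show ?thesis
  proof (intro conjI impI ballI)
    assume H: "\<forall>u. u \<noteq> {} \<and> u \<subset> {1..p} \<longrightarrow> conv_in_prob M (What u) (W u) sequentially"
    fix i assume i: "i \<in> {1..p}"
    have cu: "conv_in_prob M (\<lambda>Ntot \<omega>. ?X Ntot \<omega> u) (W u) at_top" if u: "u \<subseteq> {1..p}" for u
    proof (cases "u = {}")
      case True then show ?thesis using bot cip_const[of M "W {}" at_top] by simp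
    next
      case False
      show ?thesis
      proof (cases "u = {1..p}")
        case True then show ?thesis using top i cip_const[of M "W {1..p}" at_top] by simp
      next
        case False2: False
        have us: "u \<subset> {1..p}" using u False2 by auto
        have c: "conv_in_prob M (What u) (W u) sequentially" using H False us by blast
        have fl: "filterlim (\<lambda>Ntot. N_star p \<kappa> Ntot u) at_top at_top"
          by (rule Nstar_at_top[OF assms(2) False us])
        show ?thesis unfolding conv_in_prob_def mid[OF False False2]
        proof (intro allI impI)
          fix e :: real assume "e > 0"
          then have "((\<lambda>n. measure M {\<omega> \<in> space M. e < \<bar>What u n \<omega> - W u\<bar>}) \<longlongrightarrow> 0) sequentially"
            using c unfolding conv_in_prob_def by blast
          from filterlim_compose[OF this fl]
          show "((\<lambda>Ntot. measure M {\<omega> \<in> space M. e < \<bar>What u (N_star p \<kappa> Ntot u) \<omega> - W u\<bar>}) \<longlongrightarrow> 0) at_top"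
            by (simp add: o_def)
        qed
      qed
    qed
    have "conv_in_prob M (\<lambda>Ntot \<omega>. \<Sum>u\<in>Pow ({1..p} - {i}).
      (1 / (real p * W {1..p}) / real ((p - 1) choose card u)) * (?X Ntot \<omega> (insert i u) + (-1) * ?X Ntot \<omega> u))
      (\<Sum>u\<in>Pow ({1..p} - {i}).
      (1 / (real p * W {1..p}) / real ((p - 1) choose card u)) * (W (insert i u) + (-1) * W u)) at_top"
    proof (rule cip_sum)
      show "finite (Pow ({1..p} - {i}))" by simp
      show "prob_space M" by (rule assms(1))
      fix u n assume "u \<in> Pow ({1..p} - {i})"
      note s = sub[OF i this]
      show "(\<lambda>\<omega>. 1 / (real p * W {1..p}) / real ((p - 1) choose card u) * (?X n \<omega> (insert i u) + - 1 * ?X n \<omega> u)) \<in> borel_measurable M"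
        using meas[OF s(1)] meas[OF s(2)] by measurable
    next
      fix u assume "u \<in> Pow ({1..p} - {i})"
      note s = sub[OF i this]
      show "conv_in_prob M (\<lambda>n \<omega>. 1 / (real p * W {1..p}) / real ((p - 1) choose card u) * (?X n \<omega> (insert i u) + - 1 * ?X n \<omega> u))
          (1 / (real p * W {1..p}) / real ((p - 1) choose card u) * (W (insert i u) + - 1 * W u)) at_top"
        by (intro cip_scale cip_add cu s meas assms(1) borel_measurable_times borel_measurable_const)
    qed
    then show "conv_in_prob M (\<lambda>Ntot \<omega>. shapley_W p (?X Ntot \<omega>) i) (shapley_W p W i) at_top"
      using exp[OF i] expW[of i] by simp
  next
    assume H: "\<forall>u. u \<noteq> {} \<and> u \<subset> {1..p} \<longrightarrow> conv_as M (What u) (W u) sequentially"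
    fix i assume i: "i \<in> {1..p}"
    have fin: "finite {u. u \<noteq> {} \<and> u \<subset> {1..p}}"
      by (rule finite_subset[of _ "Pow {1..p}"]) auto
    have "AE \<omega> in M. \<forall>u\<in>{u. u \<noteq> {} \<and> u \<subset> {1..p}}. ((\<lambda>n. What u n \<omega>) \<longlongrightarrow> W u) sequentially"
      by (rule AE_finite_allI[OF fin]) (use H in \<open>auto simp: conv_as_def\<close>)
    then show "conv_as M (\<lambda>Ntot \<omega>. shapley_W p (?X Ntot \<omega>) i) (shapley_W p W i) at_top"
      unfolding conv_as_def
    proof (rule AE_mp, intro AE_I2 impI)
      fix \<omega> assume A: "\<forall>u\<in>{u. u \<noteq> {} \<and> u \<subset> {1..p}}. ((\<lambda>n. What u n \<omega>) \<longlongrightarrow> W u) sequentially"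
      have cu: "((\<lambda>Ntot. ?X Ntot \<omega> u) \<longlongrightarrow> W u) at_top" if u: "u \<subseteq> {1..p}" for u
      proof (cases "u = {}")
        case True then show ?thesis using bot by simp
      next
        case False
        show ?thesis
        proof (cases "u = {1..p}")
          case True then show ?thesis using top i by simp
        next
          case False2: False
          have us: "u \<subset> {1..p}" using u False2 by auto
          have fl: "filterlim (\<lambda>Ntot. N_star p \<kappa> Ntot u) at_top at_top"
            by (rule Nstar_at_top[OF assms(2) False us])
          have "((\<lambda>n. What u n \<omega>) \<longlongrightarrow> W u) sequentially" using A False us by blast
          from filterlim_compose[OF this fl]
          show ?thesis unfolding mid[OF False False2] by (simp add: o_def)
        qed
      qed
      have "((\<lambda>Ntot. \<Sum>u\<in>Pow ({1..p} - {i}).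
        (1 / (real p * W {1..p}) / real ((p - 1) choose card u)) * (?X Ntot \<omega> (insert i u) + (-1) * ?X Ntot \<omega> u))
        \<longlongrightarrow> (\<Sum>u\<in>Pow ({1..p} - {i}).
        (1 / (real p * W {1..p}) / real ((p - 1) choose card u)) * (W (insert i u) + (-1) * W u))) at_top"
        by (intro tendsto_sum tendsto_mult tendsto_add tendsto_const cu sub[OF i])
      then show "((\<lambda>Ntot. shapley_W p (?X Ntot \<omega>) i) \<longlongrightarrow> shapley_W p W i) at_top"
        using exp[OF i] expW[of i] by simp
    qed
  qed
qed

end
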